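(* Let $\mathcal{A}=\{a_1,\ldots,a_m\}$ be a set of $m$ distinct positive integers, and let $\phi_{\mathcal{A},\mathbb{C}}:\mathbb{C}^n\to\mathbb{C}^m$, $x\mapsto(\sum_{i=1}^n x_i^{a_j})_{j=1,\ldots,m}$, with restrictions $\phi_{\mathcal{A},\mathbb{R}}:\mathbb{R}^n\to\mathbb{R}^m$ and $\phi_{\mathcal{A},\ge0}:\mathbb{R}^n_{\ge0}\to\mathbb{R}^m_{\ge0}$. Using the classical topology: (1) the constructible set $\mathrm{im}(\phi_{\mathcal{A},\mathbb{C}})$ is not closed in $\mathbb{C}^m$ in general (there exist $n,\mathcal{A}$ for which it is not closed); (2) if some $a_j$ is even, then the semialgebraic set $\mathrm{im}(\phi_{\mathcal{A},\mathbb{R}})$ is closed in $\mathbb{R}^m$; if all $a_j$ are odd, it is not closed in general (there exist such $n,\mathcal{A}$ for which it is not closed); (3) for every $n$ and $\mathcal{A}$, the semialgebraic set $\mathrm{im}(\phi_{\mathcal{A},\ge0})$ is closed in $\mathbb{R}^m_{\ge0}$. *)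

theory Defs
  imports "HOL-Analysis.Analysis"
begin

text \<open>A point of K^n is a function x :: nat => K of which only x 0..x (n-1)
  matter; a point of K^m is a function y :: nat => K vanishing outside {..<m}.
  Closedness is with respect to the product topology on nat => K, under which the
  subspace of functions vanishing outside {..<m} is closed and homeomorphic to K^m.\<close>

definition power_sum_map :: "nat \<Rightarrow> nat list \<Rightarrow> (nat \<Rightarrow> 'a::comm_ring_1) \<Rightarrow> (nat \<Rightarrow> 'a)" where
  "power_sum_map n a x = (\<lambda>j. if j < length a then (\<Sum>i<n. x i ^ (a ! j)) else 0)"

definition valid_exponents :: "nat list \<Rightarrow> bool" where
  "valid_exponents a \<longleftrightarrow> distinct a \<and> (\<forall>k\<in>set a. 0 < k)"

definition im_complex :: "nat \<Rightarrow> nat list \<Rightarrow> (nat \<Rightarrow> complex) set" where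
  "im_complex n a = power_sum_map n a ` (UNIV :: (nat \<Rightarrow> complex) set)"

definition im_real :: "nat \<Rightarrow> nat list \<Rightarrow> (nat \<Rightarrow> real) set" where
  "im_real n a = power_sum_map n a ` (UNIV :: (nat \<Rightarrow> real) set)"

definition im_nonneg :: "nat \<Rightarrow> nat list \<Rightarrow> (nat \<Rightarrow> real) set" where
  "im_nonneg n a = power_sum_map n a ` {x :: nat \<Rightarrow> real. \<forall>i<n. 0 \<le> x i}"

definition nonneg_orthant :: "nat \<Rightarrow> (nat \<Rightarrow> real) set" where
  "nonneg_orthant m = {y. (\<forall>j<m. 0 \<le> y j) \<and> (\<forall>j\<ge>m. y j = 0)}"

end

theory Submission
  imports Defs
begin

lemma coord_tendsto:
  fixes f :: "'b \<Rightarrow> nat \<Rightarrow> 'c::topological_space"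
  assumes "(f \<longlongrightarrow> l) F"
  shows "((\<lambda>k. f k i) \<longlongrightarrow> l i) F"
  using continuous_on_tendsto_compose[OF continuous_on_product_coordinates[of i] assms]
  by simp

lemma psm_cont: "continuous_on UNIV (power_sum_map n a :: (nat \<Rightarrow> 'a::{comm_ring_1,real_normed_algebra}) \<Rightarrow> _)"
  unfolding power_sum_map_def
proof (intro continuous_on_coordinatewise_then_product)
  fix i show "continuous_on UNIV (\<lambda>x::nat \<Rightarrow> 'a. if i < length a then \<Sum>ia<n. x ia ^ a ! i else 0)"
    by (cases "i < length a") (auto intro!: continuous_intros)
qed

lemma psm_trunc: "power_sum_map n a (\<lambda>i. if i < n then x i else 0) = power_sum_map n a x"
  unfolding power_sum_map_def by auto

lemma closed_img:
  fixes a :: "nat list" and P :: "real set"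
  assumes P: "closed P" and j: "j < length a" "0 < a!j" and pos: "\<And>u. u \<in> P \<Longrightarrow> 0 \<le> u ^ (a!j)"
  shows "closed (power_sum_map n a ` {x. \<forall>i<n. x i \<in> P})"
proof -
  let ?S = "power_sum_map n a ` {x. \<forall>i<n. x i \<in> P}"
  { fix y l assume yS: "\<forall>k. y k \<in> ?S" and lim: "y \<longlonglongrightarrow> l"
    have "\<forall>k. \<exists>x. (\<forall>i<n. x i \<in> P) \<and> y k = power_sum_map n a x" using yS by blast
    then obtain x where x: "\<And>k. (\<forall>i<n. x k i \<in> P)" "\<And>k. y k = power_sum_map n a (x k)"
      by metis
    define z where "z = (\<lambda>k i. if i < n then x k i else (0::real))"
    have yz: "y k = power_sum_map n a (z k)" for k using x(2) psm_trunc unfolding z_def by metis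
    have "(\<lambda>k. y k j) \<longlonglongrightarrow> l j" using coord_tendsto[OF lim] .
    then have "Bseq (\<lambda>k. y k j)" using convergent_imp_Bseq convergentI by blast
    then obtain B where B: "\<And>k. norm (y k j) \<le> B" using BseqE by metis
    define C where "C = max 1 B"
    define K where "K = Pi UNIV (\<lambda>i. if i < n then cball 0 C \<inter> P else {0::real})"
    have zK: "z k \<in> K" for k
    proof -
      { fix i assume i: "i < n"
        let ?e = "a!j"
        have "x k i ^ ?e \<le> (\<Sum>i'<n. x k i' ^ ?e)"
          by (rule member_le_sum) (use i x(1) pos in auto)
        also have "\<dots> = y k j" using x(2)[of k] j by (simp add: power_sum_map_def)
        also have "\<dots> \<le> B" using B[of k] by simp
        finally have "\<bar>x k i\<bar> ^ ?e \<le> B" using pos[of "x k i"] x(1)[of k] i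
          by (metis abs_of_nonneg power_abs)
        moreover have "\<bar>x k i\<bar> \<le> C"
        proof (cases "\<bar>x k i\<bar> \<le> 1")
          case True then show ?thesis by (simp add: C_def)
        next
          case False
          then have "\<bar>x k i\<bar> \<le> \<bar>x k i\<bar> ^ ?e" using j(2)
            by (metis One_nat_def Suc_leI less_eq_real_def not_le power_increasing power_one_right)
          with \<open>\<bar>x k i\<bar> ^ ?e \<le> B\<close> show ?thesis by (simp add: C_def)
        qed
        ultimately have "z k i \<in> cball 0 C \<inter> P" using i x(1) by (simp add: z_def)
      }
      then show ?thesis by (auto simp: K_def z_def)
    qed
    have "compact K"
    proof -
      have "K = PiE UNIV (\<lambda>i. if i < n then cball 0 C \<inter> P else {0::real})"
        by (simp add: K_def PiE_UNIV_domain)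
      moreover have "compactin (product_topology (\<lambda>i. euclidean) UNIV) \<dots>"
        unfolding compactin_PiE using P by (auto intro: compact_Int_closed)
      ultimately show ?thesis by (simp add: euclidean_product_topology)
    qed
    then have "seq_compact K" by (rule compact_imp_seq_compact)
    then obtain zl r where zl: "zl \<in> K" "strict_mono r" "(z \<circ> r) \<longlonglongrightarrow> zl"
      using zK seq_compactE by metis
    have "(\<lambda>k. power_sum_map n a ((z \<circ> r) k)) \<longlonglongrightarrow> power_sum_map n a zl"
      using psm_cont zl(3) by (metis UNIV_I continuous_on_tendsto_compose eventually_sequentiallyI iso_tuple_UNIV_I)
    moreover have "(\<lambda>k. power_sum_map n a ((z \<circ> r) k)) \<longlonglongrightarrow> l"
      using LIMSEQ_subseq_LIMSEQ[OF lim zl(2)] by (simp add: yz o_def)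
    ultimately have "l = power_sum_map n a zl" using LIMSEQ_unique by blast
    moreover have "\<forall>i<n. zl i \<in> P"
    proof (intro allI impI)
      fix i assume "i < n"
      moreover have "zl i \<in> (if i < n then cball 0 C \<inter> P else {0})" using zl(1) unfolding K_def by (rule Pi_mem) simp
      ultimately show "zl i \<in> P" by simp
    qed
    ultimately have "l \<in> ?S" by blast
  }
  then show ?thesis unfolding closed_sequential_limits by blast
qed

lemma not_closed_13:
  "\<not> closed (power_sum_map 2 [1,3] ` (UNIV :: (nat \<Rightarrow> 'a::{real_normed_field, perfect_space}) set))"
proof
  let ?S = "power_sum_map 2 [1,3] ` (UNIV :: (nat \<Rightarrow> 'a) set)"
  assume cl: "closed ?S"
  define F where "F = (\<lambda>v::'a. \<lambda>j::nat. if j = 0 then v^2/3 else if j = 1 then v^6/27 - v^3/3 + 1 else 0)"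
  have Fin: "F v \<in> ?S" if v: "v \<noteq> 0" for v
  proof
    let ?x = "\<lambda>i::nat. if i = 0 then 1/v else v^2/3 - 1/v"
    show "F v = power_sum_map 2 [1,3] ?x"
    proof
      fix j :: nat
      consider "j = 0" | "j = 1" | "j \<ge> 2" by linarith
      then show "F v j = power_sum_map 2 [1,3] ?x j"
      proof cases
        case 1 then show ?thesis by (simp add: F_def power_sum_map_def numeral_2_eq_2)
      next
        case 2 then show ?thesis using v
          by (simp add: F_def power_sum_map_def numeral_2_eq_2 field_simps) (simp add: eval_nat_numeral algebra_simps)
      next
        case 3 then show ?thesis by (simp add: F_def power_sum_map_def)
      qed
    qed
  qed simp
  have "continuous_on UNIV F" unfolding F_def
  proof (intro continuous_on_coordinatewise_then_product)
    fix j show "continuous_on UNIV (\<lambda>v::'a. if j = 0 then v^2/3 else if j = 1 then v^6/27 - v^3/3 + 1 else 0)"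
      by (cases "j = 0"; cases "j = 1") (auto intro!: continuous_intros)
  qed
  then have "(F \<longlongrightarrow> F 0) (at 0)"
    by (metis UNIV_I continuous_on_def tendsto_within_open open_UNIV)
  moreover have "eventually (\<lambda>v. F v \<in> ?S) (at (0::'a))"
    using Fin eventually_at_topological by blast
  ultimately have "F 0 \<in> ?S" using Lim_in_closed_set[OF cl] by (metis at_neq_bot)
  then obtain x where x: "F 0 = power_sum_map 2 [1,3] x" by blast
  have e0: "x 0 + x 1 = 0" using fun_cong[OF x, of 0]
    by (simp add: F_def power_sum_map_def numeral_2_eq_2)
  have e1: "x 0 ^ 3 + x 1 ^ 3 = 1" using fun_cong[OF x, of 1]
    by (simp add: F_def power_sum_map_def numeral_2_eq_2)
  from e0 have "x 1 = - x 0" by (simp add: eq_neg_iff_add_eq_0 add.commute)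
  with e1 show False by simp
qed

lemma valid13: "valid_exponents [1,3]" by (simp add: valid_exponents_def)

theorem proposition4p1:
  shows "(\<exists>n a. 1 \<le> n \<and> valid_exponents a \<and> \<not> closed (im_complex n a))
    \<and> (\<forall>n a. valid_exponents a \<and> (\<exists>k\<in>set a. even k) \<longrightarrow> closed (im_real n a))
    \<and> (\<exists>n a. 1 \<le> n \<and> valid_exponents a \<and> (\<forall>k\<in>set a. odd k) \<and> \<not> closed (im_real n a))
    \<and> (\<forall>n a. valid_exponents a \<longrightarrow>
          closedin (top_of_set (nonneg_orthant (length a))) (im_nonneg n a))"
proof (intro conjI allI impI)
  show "\<exists>n a. 1 \<le> n \<and> valid_exponents a \<and> \<not> closed (im_complex n a)"
    using not_closed_13[where 'a=complex] valid13 unfolding im_complex_def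
    by (intro exI[of _ 2] exI[of _ "[1,3]"]) auto
  show "\<exists>n a. 1 \<le> n \<and> valid_exponents a \<and> (\<forall>k\<in>set a. odd k) \<and> \<not> closed (im_real n a)"
    using not_closed_13[where 'a=real] valid13 unfolding im_real_def
    by (intro exI[of _ 2] exI[of _ "[1,3]"]) auto
next
  fix n a assume h: "valid_exponents a \<and> (\<exists>k\<in>set a. even k)"
  then obtain k where k: "k \<in> set a" "even k" by blast
  then obtain j where j: "j < length a" "a ! j = k" by (metis in_set_conv_nth)
  have "0 < a ! j" using h k j by (simp add: valid_exponents_def)
  moreover have "0 \<le> u ^ (a ! j)" for u :: real using j k by (simp add: zero_le_even_power)
  ultimately have "closed (power_sum_map n a ` {x. \<forall>i<n. x i \<in> (UNIV :: real set)})"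
    using closed_img[of UNIV j a n] j by auto
  then show "closed (im_real n a)" by (simp add: im_real_def)
next
  fix n a assume h: "valid_exponents a"
  have sub: "im_nonneg n a \<subseteq> nonneg_orthant (length a)"
    by (auto simp: im_nonneg_def nonneg_orthant_def power_sum_map_def intro!: sum_nonneg)
  have "closed (im_nonneg n a)"
  proof (cases "a = []")
    case True
    then have "im_nonneg n a = {\<lambda>j. 0}"
      by (auto simp: im_nonneg_def power_sum_map_def intro!: image_eqI[of _ _ "\<lambda>i. 0"])
    then show ?thesis by simp
  next
    case False
    then have "0 < length a" by simp
    moreover have "0 < a ! 0" using h False by (simp add: valid_exponents_def)
    ultimately have "closed (power_sum_map n a ` {x. \<forall>i<n. x i \<in> {0::real..}})"
      by (intro closed_img) auto
    then show ?thesis by (simp add: im_nonneg_def)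
  qed
  then show "closedin (top_of_set (nonneg_orthant (length a))) (im_nonneg n a)"
    using sub closed_subset by blast
qed

end
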